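(* Consider optimal control problem OCP-1 (described in the context). Let $u_*^1$ be an optimal control with optimal trajectory $(s_*^1,e_*^1,i_*^1,j_*^1)$, and let $\psi_*=(\psi_1^*,\psi_2^*,\psi_3^*,\psi_4^* )$ be the corresponding adjoint function from the Pontryagin maximum principle, with $u_*^1(t)$ maximizing the Hamiltonian $H(s_*^1(t),e_*^1(t),i_*^1(t),j_*^1(t),\psi_*(t),u)$ over $u\in[0,u_{\max}]$. Then at $t=T$ the optimal control is positive, $u_*^1(T)>0$, and it takes either the value $\lambda_*^1(T)$ or the value $u_{\max}$.
   Context: Parameters: $\beta_1,\beta_2,\gamma,\rho_1,\rho_2>0$; $\sigma_1,\sigma_2>0$ with $\sigma_1+\sigma_2=1$; $0\le u_{\max}<1$; weights $\alpha_1,\alpha_2\ge0$, $\alpha_3>0$; horizon $T>0$; initial values $s_0,e_0,i_0,j_0>0$ with $s_0+e_0+i_0+j_0\le 1$. The admissible controls are all Lebesgue measurable $u:[0,T]\to[0,u_{\max}]$. The state system is $s'=-s(\beta_1(1-u)^2i+\beta_2(1-u)j)$, $e'=s(\beta_1(1-u)^2i+\beta_2(1-u)j)-\gamma e$, $i'=\sigma_1\gamma e-\rho_1 i$, $j'=\sigma_2\gamma e-\rho_2 j$, with $s(0)=s_0,e(0)=e_0,i(0)=i_0,j(0)=j_0$. OCP-1 is the problem of minimizing $Q(u)=\alpha_1(e(T)+i(T)+j(T))+\alpha_2\int_0^T(e+i+j)\,dt+0.5\alpha_3\int_0^Tu^2\,dt$ over admissible controls. Its Hamiltonian is $H(s,e,i,j,\psi_1,\dots,\psi_4,u)=-s(\beta_1(1-u)^2i+\beta_2(1-u)j)(\psi_1-\psi_2)-\gamma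 e(\psi_2-\sigma_1\psi_3-\sigma_2\psi_4)-\rho_1 i\psi_3-\rho_2 j\psi_4-\alpha_2(e+i+j)-0.5\alpha_3u^2$. The adjoint function $\psi_*$ is a nontrivial solution of $\psi_1'=(\beta_1(1-u_*^1)^2i_*^1+\beta_2(1-u_*^1)j_*^1)(\psi_1-\psi_2)$, $\psi_2'=\gamma(\psi_2-\sigma_1\psi_3-\sigma_2\psi_4)+\alpha_2$, $\psi_3'=\beta_1(1-u_*^1)^2s_*^1(\psi_1-\psi_2)+\rho_1\psi_3+\alpha_2$, $\psi_4'=\beta_2(1-u_*^1)s_*^1(\psi_1-\psi_2)+\rho_2\psi_4+\alpha_2$, with $\psi_1(T)=0$, $\psi_2(T)=\psi_3(T)=\psi_4(T)=-\alpha_1$. Define $A_*(t)=\beta_1s_*^1(t)i_*^1(t)(\psi_1^*(t)-\psi_2^*(t))+0.5\alpha_3$, $B_*(t)=s_*^1(t)(2\beta_1i_*^1(t)+\beta_2j_*^1(t))(\psi_1^*(t)-\psi_2^*(t))$, and, whenever $A_*(t)\neq0$, the indicator function $\lambda_*^1(t)=0.5B_*(t)/A_*(t)$. *)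

theory Defs
  imports "HOL-Analysis.Analysis"
begin

record params =
  beta1 :: real
  beta2 :: real
  gam :: real
  rho1 :: real
  rho2 :: real
  sig1 :: real
  sig2 :: real
  umax :: real
  alpha1 :: real
  alpha2 :: real
  alpha3 :: real
  horizon :: real
  s0 :: real
  e0 :: real
  i0 :: real
  j0 :: real

definition standing_assms :: "params \<Rightarrow> bool" where
  "standing_assms p \<longleftrightarrow>
     beta1 p > 0 \<and> beta2 p > 0 \<and> gam p > 0 \<and> rho1 p > 0 \<and> rho2 p > 0 \<and>
     sig1 p > 0 \<and> sig2 p > 0 \<and> sig1 p + sig2 p = 1 \<and>
     0 \<le> umax p \<and> umax p < 1 \<and>
     alpha1 p \<ge> 0 \<and> alpha2 p \<ge> 0 \<and> alpha3 p > 0 \<and> horizon p > 0 \<and>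
     s0 p > 0 \<and> e0 p > 0 \<and> i0 p > 0 \<and> j0 p > 0 \<and>
     s0 p + e0 p + i0 p + j0 p \<le> 1"

definition admissible :: "params \<Rightarrow> (real \<Rightarrow> real) \<Rightarrow> bool" where
  "admissible p u \<longleftrightarrow> u measurable_on {0..horizon p} \<and>
     (\<forall>t\<in>{0..horizon p}. 0 \<le> u t \<and> u t \<le> umax p)"

definition incid :: "params \<Rightarrow> real \<Rightarrow> real \<Rightarrow> real \<Rightarrow> real \<Rightarrow> real" where
  "incid p u s i j = s * (beta1 p * (1 - u)\<^sup>2 * i + beta2 p * (1 - u) * j)"

definition state_sol :: "params \<Rightarrow> (real \<Rightarrow> real) \<Rightarrow> (real \<Rightarrow> real) \<Rightarrow> (real \<Rightarrow> real)
    \<Rightarrow> (real \<Rightarrow> real) \<Rightarrow> (real \<Rightarrow> real) \<Rightarrow> bool" where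
  "state_sol p u s e i j \<longleftrightarrow>
     (let T = horizon p;
          fs = (\<lambda>t. - incid p (u t) (s t) (i t) (j t));
          fe = (\<lambda>t. incid p (u t) (s t) (i t) (j t) - gam p * e t);
          fi = (\<lambda>t. sig1 p * gam p * e t - rho1 p * i t);
          fj = (\<lambda>t. sig2 p * gam p * e t - rho2 p * j t)
      in fs integrable_on {0..T} \<and> fe integrable_on {0..T} \<and>
         fi integrable_on {0..T} \<and> fj integrable_on {0..T} \<and>
         (\<forall>t\<in>{0..T}.
            s t = s0 p + integral {0..t} fs \<and>
            e t = e0 p + integral {0..t} fe \<and>
            i t = i0 p + integral {0..t} fi \<and>
            j t = j0 p + integral {0..t} fj))"

definition cost :: "params \<Rightarrow> (real \<Rightarrow> real) \<Rightarrow> (real \<Rightarrow> real) \<Rightarrow> (real \<Rightarrow> real)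
    \<Rightarrow> (real \<Rightarrow> real) \<Rightarrow> real" where
  "cost p u e i j =
     alpha1 p * (e (horizon p) + i (horizon p) + j (horizon p))
     + alpha2 p * integral {0..horizon p} (\<lambda>t. e t + i t + j t)
     + 0.5 * alpha3 p * integral {0..horizon p} (\<lambda>t. (u t)\<^sup>2)"

definition optimal :: "params \<Rightarrow> (real \<Rightarrow> real) \<Rightarrow> (real \<Rightarrow> real) \<Rightarrow> (real \<Rightarrow> real)
    \<Rightarrow> (real \<Rightarrow> real) \<Rightarrow> (real \<Rightarrow> real) \<Rightarrow> bool" where
  "optimal p u s e i j \<longleftrightarrow> admissible p u \<and> state_sol p u s e i j \<and>
     (\<forall>v s' e' i' j'. admissible p v \<longrightarrow> state_sol p v s' e' i' j' \<longrightarrow>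
        cost p u e i j \<le> cost p v e' i' j')"

definition hamiltonian :: "params \<Rightarrow> real \<Rightarrow> real \<Rightarrow> real \<Rightarrow> real \<Rightarrow> real \<Rightarrow> real
    \<Rightarrow> real \<Rightarrow> real \<Rightarrow> real \<Rightarrow> real" where
  "hamiltonian p s e i j \<psi>1 \<psi>2 \<psi>3 \<psi>4 u =
     - incid p u s i j * (\<psi>1 - \<psi>2)
     - gam p * e * (\<psi>2 - sig1 p * \<psi>3 - sig2 p * \<psi>4)
     - rho1 p * i * \<psi>3 - rho2 p * j * \<psi>4
     - alpha2 p * (e + i + j) - 0.5 * alpha3 p * u\<^sup>2"

definition adjoint_sol :: "params \<Rightarrow> (real \<Rightarrow> real) \<Rightarrow> (real \<Rightarrow> real) \<Rightarrow> (real \<Rightarrow> real)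
    \<Rightarrow> (real \<Rightarrow> real) \<Rightarrow> (real \<Rightarrow> real) \<Rightarrow> (real \<Rightarrow> real) \<Rightarrow> (real \<Rightarrow> real)
    \<Rightarrow> (real \<Rightarrow> real) \<Rightarrow> bool" where
  "adjoint_sol p u s i j \<psi>1 \<psi>2 \<psi>3 \<psi>4 \<longleftrightarrow>
     (let T = horizon p;
          g1 = (\<lambda>t. (beta1 p * (1 - u t)\<^sup>2 * i t + beta2 p * (1 - u t) * j t) * (\<psi>1 t - \<psi>2 t));
          g2 = (\<lambda>t. gam p * (\<psi>2 t - sig1 p * \<psi>3 t - sig2 p * \<psi>4 t) + alpha2 p);
          g3 = (\<lambda>t. beta1 p * (1 - u t)\<^sup>2 * s t * (\<psi>1 t - \<psi>2 t) + rho1 p * \<psi>3 t + alpha2 p);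
          g4 = (\<lambda>t. beta2 p * (1 - u t) * s t * (\<psi>1 t - \<psi>2 t) + rho2 p * \<psi>4 t + alpha2 p)
      in g1 integrable_on {0..T} \<and> g2 integrable_on {0..T} \<and>
         g3 integrable_on {0..T} \<and> g4 integrable_on {0..T} \<and>
         \<psi>1 T = 0 \<and> \<psi>2 T = - alpha1 p \<and> \<psi>3 T = - alpha1 p \<and> \<psi>4 T = - alpha1 p \<and>
         (\<forall>t\<in>{0..T}.
            \<psi>1 t = \<psi>1 T - integral {t..T} g1 \<and>
            \<psi>2 t = \<psi>2 T - integral {t..T} g2 \<and>
            \<psi>3 t = \<psi>3 T - integral {t..T} g3 \<and>
            \<psi>4 t = \<psi>4 T - integral {t..T} g4) \<and>
         (\<exists>t\<in>{0..T}. (\<psi>1 t, \<psi>2 t, \<psi>3 t, \<psi>4 t) \<noteq> (0, 0, 0, 0)))"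

definition A_star :: "params \<Rightarrow> real \<Rightarrow> real \<Rightarrow> real \<Rightarrow> real \<Rightarrow> real" where
  "A_star p s i \<psi>1 \<psi>2 = beta1 p * s * i * (\<psi>1 - \<psi>2) + 0.5 * alpha3 p"

definition B_star :: "params \<Rightarrow> real \<Rightarrow> real \<Rightarrow> real \<Rightarrow> real \<Rightarrow> real \<Rightarrow> real" where
  "B_star p s i j \<psi>1 \<psi>2 = s * (2 * beta1 p * i + beta2 p * j) * (\<psi>1 - \<psi>2)"

text \<open>Indicator function lambda = 0.5 B / A (meaningful when A \<noteq> 0).\<close>
definition lambda_star :: "params \<Rightarrow> real \<Rightarrow> real \<Rightarrow> real \<Rightarrow> real \<Rightarrow> real \<Rightarrow> real" where
  "lambda_star p s i j \<psi>1 \<psi>2 = 0.5 * B_star p s i j \<psi>1 \<psi>2 / A_star p s i \<psi>1 \<psi>2"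

end

theory Submission
  imports Defs
begin

lemma hit_zero:
  fixes x f :: "real \<Rightarrow> real"
  assumes fi: "f integrable_on {0..T}"
    and xe: "\<forall>t\<in>{0..T}. x t = x0 + integral {0..t} f"
    and t1: "0 < t1" "t1 \<le> T" and x1: "x t1 = 0" and c: "c \<ge> 0"
    and fb: "\<forall>\<tau>\<in>{0..t1}. f \<tau> \<ge> - c * x \<tau>"
    and pos: "\<forall>\<tau>\<in>{0..<t1}. x \<tau> > 0"
  shows False
proof -
  have "continuous_on {0..T} (\<lambda>t. x0 + integral {0..t} f)"
    by (intro continuous_on_add continuous_on_const indefinite_integral_continuous_1 fi)
  hence contT: "continuous_on {0..T} x"
    using xe by (metis (no_types, lifting) continuous_on_cong)
  hence cont: "continuous_on {0..t1} x"
    using t1 by (meson atLeastatMost_subset_iff continuous_on_subset order_refl)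
  have fi1: "f integrable_on {0..t1}"
    using fi t1 by (intro integrable_subinterval_real[OF fi]) auto
  have key: "x \<tau> \<le> c * integral {\<tau>..t1} x" if "\<tau> \<in> {0..t1}" for \<tau>
  proof -
    have "integral {0..t1} f = integral {0..\<tau>} f + integral {\<tau>..t1} f"
      using that by (intro Henstock_Kurzweil_Integration.integral_combine[symmetric] fi1) auto
    hence d: "x t1 - x \<tau> = integral {\<tau>..t1} f"
      using xe that t1 by auto
    have xi: "x integrable_on {\<tau>..t1}"
      using cont that by (intro integrable_continuous_interval)
        (meson atLeastAtMost_iff atLeastatMost_subset_iff continuous_on_subset order_refl)
    have fi2: "f integrable_on {\<tau>..t1}"
      using that by (intro integrable_subinterval_real[OF fi1]) auto
    have "integral {\<tau>..t1} (\<lambda>t. - c * x t) \<le> integral {\<tau>..t1} f"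
    proof (rule integral_le[OF _ fi2])
      show "(\<lambda>t. - c * x t) integrable_on {\<tau>..t1}"
        using integrable_on_cmult_left[OF xi, of "-c"] by simp
    qed (use that fb in auto)
    moreover have "integral {\<tau>..t1} (\<lambda>t. - c * x t) = - c * integral {\<tau>..t1} x"
      by simp
    ultimately show ?thesis using d x1 by linarith
  qed
  define t where "t = max 0 (t1 - 1 / (2 * (c + 1)))"
  have tt: "0 \<le> t" "t < t1" using t1 c by (auto simp: t_def)
  have ct: "c * (t1 - t) < 1"
  proof -
    have "t1 - t \<le> 1 / (2 * (c + 1))" by (auto simp: t_def)
    hence "c * (t1 - t) \<le> c * (1 / (2 * (c + 1)))" using c by (intro mult_left_mono) auto
    also have "\<dots> < 1" using c by (simp add: field_simps)
    finally show ?thesis .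
  qed
  have contt: "continuous_on {t..t1} x"
    using tt by (intro continuous_on_subset[OF cont]) auto
  obtain \<tau>0 where tau0: "\<tau>0 \<in> {t..t1}" and mx: "\<forall>y\<in>{t..t1}. x y \<le> x \<tau>0"
    using continuous_attains_sup[OF compact_Icc _ contt] tt by auto
  have "x t > 0" using tt pos by auto
  moreover have "x t \<le> x \<tau>0" using mx tt by auto
  ultimately have Mpos: "x \<tau>0 > 0" by linarith
  have xi: "x integrable_on {\<tau>0..t1}"
    using cont tau0 tt by (intro integrable_continuous_interval)
      (meson atLeastAtMost_iff atLeastatMost_subset_iff continuous_on_subset order_refl order.trans)
  have "integral {\<tau>0..t1} x \<le> integral {\<tau>0..t1} (\<lambda>_. x \<tau>0)"
    using mx tau0 by (intro integral_le xi integrable_const_ivl) auto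
  also have "\<dots> = (t1 - \<tau>0) * x \<tau>0" using tau0 by simp
  finally have "c * integral {\<tau>0..t1} x \<le> c * ((t1 - \<tau>0) * x \<tau>0)"
    using c by (intro mult_left_mono) auto
  moreover have "x \<tau>0 \<le> c * integral {\<tau>0..t1} x" using key tau0 tt by auto
  moreover have "c * ((t1 - \<tau>0) * x \<tau>0) < x \<tau>0"
  proof -
    have "c * (t1 - \<tau>0) \<le> c * (t1 - t)" using c tau0 by (intro mult_left_mono) auto
    hence "c * (t1 - \<tau>0) < 1" using ct by linarith
    thus ?thesis using Mpos by (simp add: mult.assoc[symmetric])
  qed
  ultimately show False by linarith
qed

lemma ham_diff:
  "hamiltonian p S E I J P1 P2 P3 P4 v - hamiltonian p S E I J P1 P2 P3 P4 w =
   B_star p S I J P1 P2 * (v - w) - A_star p S I P1 P2 * (v\<^sup>2 - w\<^sup>2)"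
  unfolding hamiltonian_def A_star_def B_star_def incid_def
  by (simp add: power2_eq_square algebra_simps)

lemma quad_max:
  fixes A B um w :: real
  assumes A: "A > 0" and B: "B > 0" and um: "um > 0" and w: "0 \<le> w" "w \<le> um"
    and mx: "\<forall>v\<in>{0..um}. B * (v - w) - A * (v\<^sup>2 - w\<^sup>2) \<le> 0"
  shows "w > 0 \<and> (w = 0.5 * B / A \<or> w = um)"
proof -
  define l where "l = B / (2 * A)"
  have l: "l > 0" using A B by (simp add: l_def)
  have lB: "B = 2 * A * l" using A by (simp add: l_def)
  have e: "B * (v - w) - A * (v\<^sup>2 - w\<^sup>2) = A * (v - w) * (2 * l - v - w)" for v
    by (simp add: lB power2_eq_square algebra_simps)
  have w0: "w > 0"
  proof (rule ccontr)
    assume "\<not> w > 0" hence w0: "w = 0" using w by auto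
    define v where "v = min um l"
    have "v > 0" using um l by (simp add: v_def)
    moreover have "v \<le> l" "v \<le> um" by (auto simp: v_def)
    ultimately have "A * (v - w) * (2 * l - v - w) > 0" using A w0 by (intro mult_pos_pos) auto
    moreover have "v \<in> {0..um}" using \<open>v > 0\<close> \<open>v \<le> um\<close> by auto
    ultimately show False using mx e by (metis not_le)
  qed
  moreover have "w = l \<or> w = um"
  proof (rule ccontr)
    assume ne: "\<not> (w = l \<or> w = um)"
    show False
    proof (cases "w < l")
      case True
      define v where "v = min um l"
      have "v > w" using True ne w by (auto simp: v_def)
      moreover have "v \<le> l" "v \<le> um" by (auto simp: v_def)
      ultimately have "A * (v - w) * (2 * l - v - w) > 0" using A True by (intro mult_pos_pos) auto
      moreover have "v \<in> {0..um}" using \<open>v > w\<close> \<open>v \<le> um\<close> w by auto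
      ultimately show False using mx e by (metis not_le)
    next
      case False
      hence wl: "w > l" using ne by auto
      have "A * (l - w) * (2 * l - l - w) > 0"
      proof -
        have "(l - w) * (l - w) > 0" using wl by (simp add: mult_neg_neg)
        thus ?thesis using A by (simp add: mult.assoc)
      qed
      moreover have "l \<in> {0..um}" using l wl w by auto
      ultimately show False using mx e by (metis not_le)
    qed
  qed
  moreover have "l = 0.5 * B / A" by (simp add: l_def)
  ultimately show ?thesis by auto
qed

lemma state_pos:
  assumes sa: "standing_assms p" and ad: "admissible p u" and ss: "state_sol p u s e i j"
  shows "\<forall>t\<in>{0..horizon p}. s t > 0 \<and> e t > 0 \<and> i t > 0 \<and> j t > 0"
proof -
  define T where "T = horizon p"
  define fs where "fs = (\<lambda>t. - incid p (u t) (s t) (i t) (j t))"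
  define fe where "fe = (\<lambda>t. incid p (u t) (s t) (i t) (j t) - gam p * e t)"
  define fi where "fi = (\<lambda>t. sig1 p * gam p * e t - rho1 p * i t)"
  define fj where "fj = (\<lambda>t. sig2 p * gam p * e t - rho2 p * j t)"
  have I: "fs integrable_on {0..T}" "fe integrable_on {0..T}" "fi integrable_on {0..T}"
    "fj integrable_on {0..T}"
    and E: "\<forall>t\<in>{0..T}. s t = s0 p + integral {0..t} fs" "\<forall>t\<in>{0..T}. e t = e0 p + integral {0..t} fe"
    "\<forall>t\<in>{0..T}. i t = i0 p + integral {0..t} fi" "\<forall>t\<in>{0..T}. j t = j0 p + integral {0..t} fj"
    using ss unfolding state_sol_def Let_def fs_def fe_def fi_def fj_def T_def by auto
  have T0: "T > 0" using sa by (simp add: standing_assms_def T_def)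
  have contg: "continuous_on {0..T} x"
    if "g integrable_on {0..T}" "\<forall>t\<in>{0..T}. x t = x0 + integral {0..t} g" for x g :: "real \<Rightarrow> real" and x0
  proof -
    have "continuous_on {0..T} (\<lambda>t. x0 + integral {0..t} g)"
      by (intro continuous_on_add continuous_on_const indefinite_integral_continuous_1 that(1))
    thus ?thesis using that(2) by (metis (no_types, lifting) continuous_on_cong)
  qed
  have cs: "continuous_on {0..T} s" using contg I(1) E(1) by blast
  have ce: "continuous_on {0..T} e" using contg I(2) E(2) by blast
  have ci: "continuous_on {0..T} i" using contg I(3) E(3) by blast
  have cj: "continuous_on {0..T} j" using contg I(4) E(4) by blast
  have init: "s 0 = s0 p" "e 0 = e0 p" "i 0 = i0 p" "j 0 = j0 p"
    using E T0 by auto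
  define m where "m t = min (min (s t) (e t)) (min (i t) (j t))" for t
  have cm: "continuous_on {0..T} m" unfolding m_def
    by (intro continuous_on_min cs ce ci cj)
  obtain K0 where K0: "K0 \<in> {0..T}" "\<forall>t\<in>{0..T}. beta1 p * i t + beta2 p * j t \<le> beta1 p * i K0 + beta2 p * j K0"
  proof -
    have "continuous_on {0..T} (\<lambda>t. beta1 p * i t + beta2 p * j t)"
      by (intro continuous_on_add continuous_on_mult_left ci cj)
    from continuous_attains_sup[OF compact_Icc _ this] T0 show ?thesis using that by auto
  qed
  define K where "K = max 0 (beta1 p * i K0 + beta2 p * j K0)"
  have K: "K \<ge> 0" "\<forall>t\<in>{0..T}. beta1 p * i t + beta2 p * j t \<le> K"
    using K0 by (auto simp: K_def intro: order.trans)
  have "\<forall>t\<in>{0..T}. m t > 0"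
  proof (rule ccontr)
    assume "\<not> (\<forall>t\<in>{0..T}. m t > 0)"
    define Z where "Z = {0..T} \<inter> m -` {..0}"
    have Zne: "Z \<noteq> {}" using \<open>\<not> _\<close> by (auto simp: Z_def not_less)
    have Zc: "closed Z" unfolding Z_def by (intro continuous_closed_preimage cm) auto
    have Zb: "bdd_below Z" unfolding Z_def by (rule bdd_belowI[of _ 0]) auto
    define t1 where "t1 = Inf Z"
    have t1Z: "t1 \<in> Z" using closed_contains_Inf[OF Zne Zb Zc] by (simp add: t1_def)
    hence t1T: "0 \<le> t1" "t1 \<le> T" "m t1 \<le> 0" by (auto simp: Z_def)
    have before: "m \<tau> > 0" if "\<tau> \<in> {0..<t1}" for \<tau>
    proof (rule ccontr)
      assume "\<not> m \<tau> > 0"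
      hence "\<tau> \<in> Z" using that t1T by (auto simp: Z_def)
      hence "t1 \<le> \<tau>" unfolding t1_def using Zb by (rule cInf_lower)
      thus False using that by auto
    qed
    have "m 0 > 0" using sa init by (auto simp: m_def standing_assms_def)
    hence t1pos: "t1 > 0" using t1T by (metis less_eq_real_def not_le)
    have nn: "x t1 \<ge> 0" if "continuous_on {0..T} x" "\<forall>\<tau>\<in>{0..<t1}. x \<tau> > 0" for x :: "real \<Rightarrow> real"
    proof (rule continuous_ge_on_closure[of "{0..<t1}" x t1 0])
      show "continuous_on (closure {0..<t1}) x"
        using t1pos t1T by (auto intro: continuous_on_subset[OF that(1)])
    qed (use t1pos that(2) in \<open>auto simp: less_imp_le\<close>)
    have posb: "s \<tau> > 0 \<and> e \<tau> > 0 \<and> i \<tau> > 0 \<and> j \<tau> > 0" if "\<tau> \<in> {0..<t1}" for \<tau>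
      using before[OF that] by (auto simp: m_def)
    have nn1: "s t1 \<ge> 0" "e t1 \<ge> 0" "i t1 \<ge> 0" "j t1 \<ge> 0"
      using nn[OF cs] nn[OF ce] nn[OF ci] nn[OF cj] posb by auto
    have nnall: "s \<tau> \<ge> 0 \<and> e \<tau> \<ge> 0 \<and> i \<tau> \<ge> 0 \<and> j \<tau> \<ge> 0" if "\<tau> \<in> {0..t1}" for \<tau>
    proof (cases "\<tau> = t1")
      case True thus ?thesis using nn1 by auto
    next
      case False thus ?thesis using posb[of \<tau>] that by force
    qed
    have uu: "0 \<le> u \<tau> \<and> u \<tau> \<le> 1" if "\<tau> \<in> {0..t1}" for \<tau>
      using ad sa that t1T unfolding admissible_def standing_assms_def T_def by force
    have kb: "0 \<le> beta1 p * (1 - u \<tau>)\<^sup>2 * i \<tau> + beta2 p * (1 - u \<tau>) * j \<tau> \<and>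
              beta1 p * (1 - u \<tau>)\<^sup>2 * i \<tau> + beta2 p * (1 - u \<tau>) * j \<tau> \<le> K"
      if "\<tau> \<in> {0..t1}" for \<tau>
    proof -
      have b: "beta1 p > 0" "beta2 p > 0" using sa by (auto simp: standing_assms_def)
      have u: "0 \<le> 1 - u \<tau>" "1 - u \<tau> \<le> 1" using uu[OF that] by auto
      have u2: "0 \<le> (1 - u \<tau>)\<^sup>2" "(1 - u \<tau>)\<^sup>2 \<le> 1" using u by (auto simp: power_le_one)
      have ij: "i \<tau> \<ge> 0" "j \<tau> \<ge> 0" using nnall[OF that] by auto
      have "beta1 p * (1 - u \<tau>)\<^sup>2 * i \<tau> \<le> beta1 p * i \<tau>"
        using b u2 ij mult_right_mono[of "(1 - u \<tau>)\<^sup>2" 1 "beta1 p * i \<tau>"] by (simp add: algebra_simps)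
      moreover have "beta2 p * (1 - u \<tau>) * j \<tau> \<le> beta2 p * j \<tau>"
        using b u ij mult_right_mono[of "(1 - u \<tau>)" 1 "beta2 p * j \<tau>"] by (simp add: algebra_simps)
      moreover have "beta1 p * i \<tau> + beta2 p * j \<tau> \<le> K" using K that t1T by auto
      moreover have "0 \<le> beta1 p * (1 - u \<tau>)\<^sup>2 * i \<tau>" "0 \<le> beta2 p * (1 - u \<tau>) * j \<tau>"
        using b u2 u ij by auto
      ultimately show ?thesis by linarith
    qed
    have pars: "gam p > 0" "rho1 p > 0" "rho2 p > 0" "sig1 p > 0" "sig2 p > 0"
      using sa by (auto simp: standing_assms_def)
    have bs: "\<forall>\<tau>\<in>{0..t1}. fs \<tau> \<ge> - K * s \<tau>"
    proof
      fix \<tau> assume \<tau>: "\<tau> \<in> {0..t1}"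
      have "s \<tau> * (beta1 p * (1 - u \<tau>)\<^sup>2 * i \<tau> + beta2 p * (1 - u \<tau>) * j \<tau>) \<le> s \<tau> * K"
        using kb[OF \<tau>] nnall[OF \<tau>] by (intro mult_left_mono) auto
      thus "fs \<tau> \<ge> - K * s \<tau>" by (simp add: fs_def incid_def mult.commute)
    qed
    have be: "\<forall>\<tau>\<in>{0..t1}. fe \<tau> \<ge> - gam p * e \<tau>"
    proof
      fix \<tau> assume \<tau>: "\<tau> \<in> {0..t1}"
      have "0 \<le> s \<tau> * (beta1 p * (1 - u \<tau>)\<^sup>2 * i \<tau> + beta2 p * (1 - u \<tau>) * j \<tau>)"
        using kb[OF \<tau>] nnall[OF \<tau>] by (intro mult_nonneg_nonneg) auto
      thus "fe \<tau> \<ge> - gam p * e \<tau>" by (simp add: fe_def incid_def)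
    qed
    have bi: "\<forall>\<tau>\<in>{0..t1}. fi \<tau> \<ge> - rho1 p * i \<tau>"
      using nnall pars by (auto simp: fi_def)
    have bj: "\<forall>\<tau>\<in>{0..t1}. fj \<tau> \<ge> - rho2 p * j \<tau>"
      using nnall pars by (auto simp: fj_def)
    have "s t1 = 0 \<or> e t1 = 0 \<or> i t1 = 0 \<or> j t1 = 0"
      using t1T nn1 by (auto simp: m_def)
    thus False
    proof (elim disjE)
      assume "s t1 = 0" thus False
        using hit_zero[OF I(1) E(1) t1pos t1T(2) _ K(1) bs] posb by auto
    next
      assume "e t1 = 0" thus False
        using hit_zero[OF I(2) E(2) t1pos t1T(2) _ _ be] posb pars by auto
    next
      assume "i t1 = 0" thus False
        using hit_zero[OF I(3) E(3) t1pos t1T(2) _ _ bi] posb pars by auto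
    next
      assume "j t1 = 0" thus False
        using hit_zero[OF I(4) E(4) t1pos t1T(2) _ _ bj] posb pars by auto
    qed
  qed
  thus ?thesis by (auto simp: m_def T_def)
qed

theorem lemma3:
  fixes p :: params and u s e i j \<psi>1 \<psi>2 \<psi>3 \<psi>4 :: "real \<Rightarrow> real"
  assumes "standing_assms p"
    and "alpha1 p > 0" and "umax p > 0"
    and "optimal p u s e i j"
    and "adjoint_sol p u s i j \<psi>1 \<psi>2 \<psi>3 \<psi>4"
    and "\<forall>t\<in>{0..horizon p}. \<forall>v\<in>{0..umax p}.
           hamiltonian p (s t) (e t) (i t) (j t) (\<psi>1 t) (\<psi>2 t) (\<psi>3 t) (\<psi>4 t) v
           \<le> hamiltonian p (s t) (e t) (i t) (j t) (\<psi>1 t) (\<psi>2 t) (\<psi>3 t) (\<psi>4 t) (u t)"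
  shows "u (horizon p) > 0 \<and>
         A_star p (s (horizon p)) (i (horizon p)) (\<psi>1 (horizon p)) (\<psi>2 (horizon p)) \<noteq> 0 \<and>
         (u (horizon p) = lambda_star p (s (horizon p)) (i (horizon p)) (j (horizon p))
                            (\<psi>1 (horizon p)) (\<psi>2 (horizon p))
          \<or> u (horizon p) = umax p)"
proof -
  define T where "T = horizon p"
  have sa: "standing_assms p" and ad: "admissible p u" and ss: "state_sol p u s e i j"
    using assms(1,4) by (auto simp: optimal_def)
  have T0: "T > 0" using sa by (simp add: standing_assms_def T_def)
  have pos: "s T > 0" "i T > 0" "j T > 0"
    using state_pos[OF sa ad ss] T0 by (auto simp: T_def)
  have psi: "\<psi>1 T = 0" "\<psi>2 T = - alpha1 p"
    using assms(5) unfolding adjoint_sol_def Let_def T_def by auto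
  have pars: "beta1 p > 0" "beta2 p > 0" "alpha3 p > 0" using sa by (auto simp: standing_assms_def)
  define A where "A = A_star p (s T) (i T) (\<psi>1 T) (\<psi>2 T)"
  define B where "B = B_star p (s T) (i T) (j T) (\<psi>1 T) (\<psi>2 T)"
  have Apos: "A > 0" unfolding A_def A_star_def psi using pos pars assms(2) by (simp add: add_pos_pos)
  have Bpos: "B > 0" unfolding B_def B_star_def psi using pos pars assms(2)
    by (intro mult_pos_pos add_pos_pos) auto
  have w: "0 \<le> u T" "u T \<le> umax p" using ad T0 by (auto simp: admissible_def T_def)
  have mx: "\<forall>v\<in>{0..umax p}. B * (v - u T) - A * (v\<^sup>2 - (u T)\<^sup>2) \<le> 0"
  proof
    fix v assume "v \<in> {0..umax p}"
    hence "hamiltonian p (s T) (e T) (i T) (j T) (\<psi>1 T) (\<psi>2 T) (\<psi>3 T) (\<psi>4 T) v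
           - hamiltonian p (s T) (e T) (i T) (j T) (\<psi>1 T) (\<psi>2 T) (\<psi>3 T) (\<psi>4 T) (u T) \<le> 0"
      using assms(6) T0 by (auto simp: T_def)
    thus "B * (v - u T) - A * (v\<^sup>2 - (u T)\<^sup>2) \<le> 0"
      unfolding ham_diff A_def B_def .
  qed
  have "u T > 0 \<and> (u T = 0.5 * B / A \<or> u T = umax p)"
    by (rule quad_max[OF Apos Bpos assms(3) w mx])
  thus ?thesis using Apos unfolding T_def A_def B_def lambda_star_def by auto
qed

end
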